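(* For MLAPD on a path of depth $D$ (a path graph with $D$ nodes whose root is an endpoint), the online algorithm \textsc{Double} is $(4-2^{1-\frac{D}{2}})$-competitive.
   Context: MLAPD: an instance is a rooted tree $\mathcal{T}$ with root $r$ and positive node costs $c(v)>0$, together with requests $\rho=(v,a,d)$ (node, arrival time, deadline $d\ge a$; deadlines distinct). A service $(S,t)$ is a subtree $S\ni r$ transmitted at time $t$, costing $c(S)=\sum_{u\in S}c(u)$; it satisfies $(v,a,d)$ if $v\in S$ and $a\le t\le d$. A feasible schedule satisfies every request; its cost is the sum of service costs. Online: requests revealed at arrival. $c$-competitive: cost at most $c$ times optimal on every instance. For request $\rho$ at $v$, $P_\rho$ is the $r$–$v$ path node set; $c(r\to\gamma\mid S)=c(P_\gamma\setminus S)$. A request is pending at time $t$ if it has arrived by $t$ and was not satisfied earlier. \textsc{Double}: when a pending request $\rho$ reaches its deadline $d_\rho$, set $S=P_\rho$; repeat: if no pending request is unsatisfied by $S$ stop; else let $\gamma$ be the pending request of earliest deadline not satisfied by $S$; if $c(S)+c(r\to\gamma\mid S)>2c(P_\rho)$ stop, else $S\gets S\cup P_\gamma$. Transmit $(S,d_\rho)$. *)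

theory Defs
  imports Complex_Main
begin

text \<open>MLAPD on a path of depth D. Nodes are 1..D, the root is node 1 (an endpoint),
  and the parent of node v > 1 is v - 1. A request is a triple (v, a, d):
  node, arrival time, deadline.\<close>

type_synonym request = "nat \<times> real \<times> real"

definition rnode :: "request \<Rightarrow> nat" where "rnode \<rho> = fst \<rho>"
definition rarr :: "request \<Rightarrow> real" where "rarr \<rho> = fst (snd \<rho>)"
definition rdl :: "request \<Rightarrow> real" where "rdl \<rho> = snd (snd \<rho>)"

definition pathset :: "nat \<Rightarrow> nat set" where "pathset v = {1..v}"

definition rooted_subtree :: "nat \<Rightarrow> nat set \<Rightarrow> bool" where
  "rooted_subtree D S \<longleftrightarrow> S \<subseteq> {1..D} \<and> 1 \<in> S \<and> (\<forall>v\<in>S. v > 1 \<longrightarrow> v - 1 \<in> S)"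

definition setcost :: "(nat \<Rightarrow> real) \<Rightarrow> nat set \<Rightarrow> real" where
  "setcost c S = (\<Sum>u\<in>S. c u)"

type_synonym service = "nat set \<times> real"
type_synonym schedule = "service list"

definition satisfies :: "service \<Rightarrow> request \<Rightarrow> bool" where
  "satisfies s \<rho> \<longleftrightarrow> rnode \<rho> \<in> fst s \<and> rarr \<rho> \<le> snd s \<and> snd s \<le> rdl \<rho>"

definition valid_instance :: "nat \<Rightarrow> (nat \<Rightarrow> real) \<Rightarrow> request list \<Rightarrow> bool" where
  "valid_instance D c rs \<longleftrightarrow> D \<ge> 1 \<and> (\<forall>v\<in>{1..D}. c v > 0)
     \<and> (\<forall>\<rho>\<in>set rs. rnode \<rho> \<in> {1..D} \<and> rarr \<rho> \<le> rdl \<rho>)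
     \<and> distinct (map rdl rs)"

definition feasible :: "nat \<Rightarrow> request list \<Rightarrow> schedule \<Rightarrow> bool" where
  "feasible D rs sch \<longleftrightarrow> (\<forall>s\<in>set sch. rooted_subtree D (fst s))
     \<and> (\<forall>\<rho>\<in>set rs. \<exists>s\<in>set sch. satisfies s \<rho>)"

definition sched_cost :: "(nat \<Rightarrow> real) \<Rightarrow> schedule \<Rightarrow> real" where
  "sched_cost c sch = (\<Sum>s\<leftarrow>sch. setcost c (fst s))"

text \<open>The growth loop of Double for the request \<rho>: the pending requests are given
  sorted by deadline; requests already satisfied by S are skipped, the first one not
  satisfied by S is either added or the loop stops.\<close>
fun grow :: "(nat \<Rightarrow> real) \<Rightarrow> request \<Rightarrow> nat set \<Rightarrow> request list \<Rightarrow> nat set" where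
  "grow c \<rho> S [] = S"
| "grow c \<rho> S (\<gamma> # \<gamma>s) =
     (if rnode \<gamma> \<in> S then grow c \<rho> S \<gamma>s
      else if setcost c S + setcost c (pathset (rnode \<gamma>) - S) > 2 * setcost c (pathset (rnode \<rho>))
      then S else grow c \<rho> (S \<union> pathset (rnode \<gamma>)) \<gamma>s)"

text \<open>One event of Double: processing the deadline of request \<rho> (events are processed
  in increasing order of deadline). State: set of already satisfied requests and the
  schedule produced so far.\<close>
definition double_step :: "(nat \<Rightarrow> real) \<Rightarrow> request list \<Rightarrow> request set \<times> schedule
     \<Rightarrow> request \<Rightarrow> request set \<times> schedule" where
  "double_step c rs st \<rho> =
     (let (sat, sch) = st in
      if \<rho> \<in> sat then (sat, sch)
      else let t = rdl \<rho>;
               pend = filter (\<lambda>\<gamma>. rarr \<gamma> \<le> t \<and> \<gamma> \<notin> sat) (sort_key rdl rs);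
               S = grow c \<rho> (pathset (rnode \<rho>)) pend
           in (sat \<union> {\<gamma>\<in>set rs. satisfies (S, t) \<gamma>}, sch @ [(S, t)]))"

definition double :: "(nat \<Rightarrow> real) \<Rightarrow> request list \<Rightarrow> schedule" where
  "double c rs = snd (fold (\<lambda>\<rho> st. double_step c rs st \<rho>) (sort_key rdl rs) ({}, []))"

text \<open>c-competitiveness of an online algorithm on paths of depth D: on every instance
  it outputs a feasible schedule whose cost is at most ratio times the cost of
  every feasible schedule (hence of an optimal one).\<close>
definition competitive_on_path ::
  "nat \<Rightarrow> ((nat \<Rightarrow> real) \<Rightarrow> request list \<Rightarrow> schedule) \<Rightarrow> real \<Rightarrow> bool" where
  "competitive_on_path D alg ratio \<longleftrightarrow>
     (\<forall>c rs. valid_instance D c rs \<longrightarrow>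
        feasible D rs (alg c rs) \<and>
        (\<forall>sch. feasible D rs sch \<longrightarrow> sched_cost c (alg c rs) \<le> ratio * sched_cost c sch))"

end

theory Submission
  imports Defs
begin


lemma pathset_union: "pathset m \<union> pathset w = pathset (max m w)"
  by (auto simp: pathset_def)

lemma setcost_union_diff:
  assumes "finite S" "finite P"
  shows "setcost c (S \<union> P) = setcost c S + setcost c (P - S)"
proof -
  have e: "S \<union> P = S \<union> (P - S)" by auto
  have "sum c (S \<union> (P - S)) = sum c S + sum c (P - S)"
    using assms by (intro sum.union_disjoint) auto
  then show ?thesis unfolding setcost_def e .
qed

lemma grow_sub: "S \<subseteq> grow c \<rho> S l"
proof (induction l arbitrary: S)
  case Nil then show ?case by simp
next
  case (Cons g gs)
  have "S \<subseteq> grow c \<rho> (S \<union> pathset (rnode g)) gs" using Cons.IH[of "S \<union> pathset (rnode g)"] by blast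
  then show ?case using Cons.IH[of S] by auto
qed

lemma grow_shape:
  assumes "m \<le> D" "\<forall>\<gamma>\<in>set l. rnode \<gamma> \<le> D"
  shows "\<exists>m'. grow c \<rho> (pathset m) l = pathset m' \<and> m \<le> m' \<and> m' \<le> D"
  using assms
proof (induction l arbitrary: m)
  case Nil then show ?case by auto
next
  case (Cons g gs)
  show ?case
  proof (cases "rnode g \<in> pathset m")
    case True
    then show ?thesis using Cons by auto
  next
    case False
    note F = False
    show ?thesis
    proof (cases "setcost c (pathset m) + setcost c (pathset (rnode g) - pathset m) > 2 * setcost c (pathset (rnode \<rho>))")
      case True then show ?thesis using F Cons.prems by auto
    next
      case False
      have "grow c \<rho> (pathset m) (g # gs) = grow c \<rho> (pathset (max m (rnode g))) gs"
        using F False by (simp add: pathset_union)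
      moreover obtain m' where "grow c \<rho> (pathset (max m (rnode g))) gs = pathset m'" "max m (rnode g) \<le> m'" "m' \<le> D"
        using Cons.IH[of "max m (rnode g)"] Cons.prems by auto
      ultimately show ?thesis by auto
    qed
  qed
qed

lemma grow_cost:
  assumes "finite S" "setcost c S \<le> 2 * setcost c (pathset (rnode \<rho>))"
  shows "setcost c (grow c \<rho> S l) \<le> 2 * setcost c (pathset (rnode \<rho>))"
  using assms
proof (induction l arbitrary: S)
  case Nil then show ?case by simp
next
  case (Cons g gs)
  have fp: "finite (pathset (rnode g))" by (simp add: pathset_def)
  show ?case
  proof (cases "rnode g \<in> S")
    case True then show ?thesis using Cons by auto
  next
    case False
    then show ?thesis using Cons fp
      by (auto simp: setcost_union_diff not_less)
  qed
qed

lemma grow_stop: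
  assumes "sorted (map rdl l)" "\<gamma> \<in> set l" "rnode \<gamma> \<notin> grow c \<rho> S l" "\<forall>x\<in>set l. rnode x \<ge> 1"
  shows "\<exists>\<gamma>'\<in>set l. rdl \<gamma>' \<le> rdl \<gamma> \<and> rnode \<gamma>' \<notin> grow c \<rho> S l \<and>
     setcost c (grow c \<rho> S l) + setcost c (pathset (rnode \<gamma>') - grow c \<rho> S l) > 2 * setcost c (pathset (rnode \<rho>))"
  using assms
proof (induction l arbitrary: S)
  case Nil then show ?case by simp
next
  case (Cons g gs)
  have srt: "sorted (map rdl gs)" and hd: "\<forall>x\<in>set gs. rdl g \<le> rdl x" using Cons.prems(1) by auto
  show ?case
  proof (cases "rnode g \<in> S")
    case True
    then have eq: "grow c \<rho> S (g # gs) = grow c \<rho> S gs" by simp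
    have "\<gamma> \<noteq> g" using True grow_sub[of S c \<rho> gs] Cons.prems(3) eq by auto
    then have "\<gamma> \<in> set gs" using Cons.prems(2) by auto
    then show ?thesis using Cons.IH[OF srt, of S] Cons.prems(3,4) eq by auto
  next
    case F: False
    show ?thesis
    proof (cases "setcost c S + setcost c (pathset (rnode g) - S) > 2 * setcost c (pathset (rnode \<rho>))")
      case True
      then have eq: "grow c \<rho> S (g # gs) = S" using F by simp
      have "rdl g \<le> rdl \<gamma>" using Cons.prems(2) hd by auto
      then show ?thesis using True eq F by (intro bexI[of _ g]) auto
    next
      case False
      then have eq: "grow c \<rho> S (g # gs) = grow c \<rho> (S \<union> pathset (rnode g)) gs" using F by simp
      have "rnode g \<in> pathset (rnode g)" using Cons.prems(4) by (simp add: pathset_def)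
      then have "\<gamma> \<noteq> g" using grow_sub[of "S \<union> pathset (rnode g)" c \<rho> gs] Cons.prems(3) eq by auto
      then have "\<gamma> \<in> set gs" using Cons.prems(2) by auto
      then show ?thesis using Cons.IH[OF srt, of "S \<union> pathset (rnode g)"] Cons.prems(3,4) eq by auto
    qed
  qed
qed



definition hh :: "nat \<Rightarrow> real" where "hh v = 2 - 2 powr (1 - real v / 2)"

lemma hh_mono: "v \<le> w \<Longrightarrow> hh v \<le> hh w"
  unfolding hh_def by (auto intro!: powr_mono)

lemma hh_nonneg: "1 \<le> v \<Longrightarrow> 0 \<le> hh v"
proof -
  assume "1 \<le> v"
  then have "2 powr (1 - real v / 2) \<le> 2 powr 1" by (intro powr_mono) auto
  then show ?thesis by (simp add: hh_def)
qed

lemma hh_two: "hh (v + 2) = hh v / 2 + 1"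
proof -
  have "2 powr (1 - real (v+2) / 2) = 2 powr (1 - real v / 2) / 2 powr 1"
    by (subst powr_diff[symmetric]) (auto simp: field_simps)
  then show ?thesis by (simp add: hh_def)
qed

lemma hh_one: "1 \<le> v \<Longrightarrow> (hh v + 1) / 2 \<le> hh (v + 1)"
proof -
  assume v: "1 \<le> v"
  define p where "p = 2 powr (1 - real v / 2)"
  define u :: real where "u = 2 powr (1/2)"
  have u2: "u * u = 2" unfolding u_def by (simp flip: powr_add)
  have up: "u > 0" unfolding u_def by simp
  have pp: "p > 0" unfolding p_def by simp
  have pu: "p \<le> u" unfolding p_def u_def using v by (intro powr_mono) auto
  have ex: "1 - real (v+1) / 2 = (1 - real v / 2) - 1/2" by (simp add: field_simps)
  have "2 powr (1 - real (v+1) / 2) = p / u"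
    unfolding ex p_def u_def by (rule powr_diff)
  then have e: "hh (v+1) = 2 - p / u" by (simp add: hh_def)
  have "(2 - p + 1) / 2 \<le> 2 - p / u"
  proof -
    have u2l: "u < 2"
    proof (rule ccontr)
      assume "\<not> u < 2"
      then have "2 * 2 \<le> u * u" by (intro mult_mono) auto
      then show False using u2 by simp
    qed
    have "p * (2 - u) \<le> u * (2 - u)" using pu u2l by (intro mult_right_mono) auto
    also have "\<dots> = 2 * u - u * u" by (simp add: algebra_simps)
    finally have "p * (2 - u) \<le> u" using u2 u2l by simp
    then have "p * 2 - p * u \<le> u" by (simp add: algebra_simps)
    then have "p * 2 \<le> u + p * u" by linarith
    then have "p / u * 2 \<le> 1 + p" using up by (simp add: field_simps)
    then show ?thesis by (simp add: field_simps)
  qed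
  then show ?thesis using e by (simp add: hh_def p_def)
qed



locale dbl =
  fixes D :: nat and c :: "nat \<Rightarrow> real" and rs :: "request list"
  assumes valid: "valid_instance D c rs"
begin

definition "rsS = sort_key rdl rs"
definition "N = length rs"
definition "st j = fold (\<lambda>\<rho> st. double_step c rs st \<rho>) (take j rsS) ({}, [])"
definition "sat j = fst (st j)"
definition "sch j = snd (st j)"
definition "req j = rsS ! j"
definition "dl j = rdl (req j)"
definition "nd j = rnode (req j)"
definition "pend j = filter (\<lambda>\<gamma>. rarr \<gamma> \<le> dl j \<and> \<gamma> \<notin> sat j) rsS"
definition "Sv j = grow c (req j) (pathset (nd j)) (pend j)"
definition "trig j \<longleftrightarrow> req j \<notin> sat j"
definition "X v = setcost c (pathset v)"

lemma Dge: "D \<ge> 1" using valid by (simp add: valid_instance_def)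
lemma cpos: "1 \<le> v \<Longrightarrow> v \<le> D \<Longrightarrow> c v > 0" using valid by (simp add: valid_instance_def)
lemma rsok: "\<gamma> \<in> set rs \<Longrightarrow> 1 \<le> rnode \<gamma> \<and> rnode \<gamma> \<le> D \<and> rarr \<gamma> \<le> rdl \<gamma>"
  using valid by (auto simp: valid_instance_def)
lemma inj: "\<gamma> \<in> set rs \<Longrightarrow> \<delta> \<in> set rs \<Longrightarrow> rdl \<gamma> = rdl \<delta> \<Longrightarrow> \<gamma> = \<delta>"
  using valid by (auto simp: valid_instance_def distinct_map inj_on_def)

lemma len: "length rsS = N" by (simp add: rsS_def N_def)
lemma setS: "set rsS = set rs" by (simp add: rsS_def)
lemma sortedS: "sorted (map rdl rsS)" by (simp add: rsS_def)
lemma distS: "distinct (map rdl rsS)"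
  using valid by (simp add: rsS_def valid_instance_def distinct_map)
lemma strictS: "sorted_wrt (<) (map rdl rsS)" using sortedS distS strict_sorted_iff by blast

lemma req_in: "j < N \<Longrightarrow> req j \<in> set rs"
  using len setS by (metis nth_mem req_def)
lemma dl_less: "i < j \<Longrightarrow> j < N \<Longrightarrow> dl i < dl j"
  using sorted_wrt_nth_less[OF strictS, of i j] len by (simp add: dl_def req_def)
lemma dl_less_iff: "i < N \<Longrightarrow> j < N \<Longrightarrow> dl i < dl j \<longleftrightarrow> i < j"
  by (metis dl_less linorder_neq_iff order_less_asym)
lemma in_req: "\<gamma> \<in> set rs \<Longrightarrow> \<exists>g<N. req g = \<gamma>"
  using setS len by (metis in_set_conv_nth req_def)

lemma st_step: "j < N \<Longrightarrow> st (Suc j) = (if trig j then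
   (sat j \<union> {\<gamma>\<in>set rs. satisfies (Sv j, dl j) \<gamma>}, sch j @ [(Sv j, dl j)]) else st j)"
proof -
  assume j: "j < N"
  have "take (Suc j) rsS = take j rsS @ [req j]" using j len by (simp add: take_Suc_conv_app_nth req_def)
  then have "st (Suc j) = double_step c rs (st j) (req j)" by (simp add: st_def)
  moreover have e: "st j = (sat j, sch j)" by (simp add: sat_def sch_def)
  ultimately show ?thesis
    by (simp add: double_step_def trig_def Let_def Sv_def pend_def dl_def nd_def rsS_def)
qed

lemma sat_step: "j < N \<Longrightarrow> sat (Suc j) = (if trig j then sat j \<union> {\<gamma>\<in>set rs. satisfies (Sv j, dl j) \<gamma>} else sat j)"
  using st_step by (simp add: sat_def)
lemma sch_step: "j < N \<Longrightarrow> sch (Suc j) = (if trig j then sch j @ [(Sv j, dl j)] else sch j)"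
  using st_step by (simp add: sch_def)

lemma sat_mono: "i \<le> j \<Longrightarrow> j \<le> N \<Longrightarrow> sat i \<subseteq> sat j"
proof (induction j)
  case 0 then show ?case by simp
next
  case (Suc j)
  then show ?case
    by (cases "i = Suc j") (auto simp: sat_step)
qed

lemma req_sat: "g < N \<Longrightarrow> req g \<in> sat (Suc g)"
proof -
  assume g: "g < N"
  show ?thesis
  proof (cases "trig g")
    case False then show ?thesis using sat_step[OF g] by (simp add: trig_def)
  next
    case True
    have r: "req g \<in> set rs" using req_in[OF g] .
    have "nd g \<in> pathset (nd g)" using rsok[OF r] by (simp add: pathset_def nd_def)
    then have "nd g \<in> Sv g" using grow_sub unfolding Sv_def by blast
    then have "satisfies (Sv g, dl g) (req g)" using rsok[OF r] by (simp add: satisfies_def nd_def dl_def)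
    then show ?thesis using sat_step[OF g] True r by simp
  qed
qed

lemma first_sat:
  assumes "\<gamma> \<notin> sat i" "\<gamma> \<in> sat j" "j \<le> N" "i \<le> N"
  shows "\<exists>k. i \<le> k \<and> k < j \<and> trig k \<and> satisfies (Sv k, dl k) \<gamma>"
  using assms
proof (induction j)
  case 0 then show ?case by (simp add: sat_def st_def)
next
  case (Suc j)
  show ?case
  proof (cases "\<gamma> \<in> sat j")
    case True
    then show ?thesis using Suc by fastforce
  next
    case False
    then have "trig j \<and> satisfies (Sv j, dl j) \<gamma>" using Suc.prems sat_step[of j] by (auto split: if_splits)
    moreover have "i \<le> j"
    proof (rule ccontr)
      assume "\<not> i \<le> j"
      then have "sat (Suc j) \<subseteq> sat i" using sat_mono[of "Suc j" i] Suc.prems by simp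
      then show False using Suc.prems by blast
    qed
    ultimately show ?thesis by auto
  qed
qed

lemma Sv_shape: "j < N \<Longrightarrow> \<exists>m. Sv j = pathset m \<and> nd j \<le> m \<and> m \<le> D"
proof -
  assume j: "j < N"
  have "\<forall>\<gamma>\<in>set (pend j). rnode \<gamma> \<le> D" using rsok setS by (auto simp: pend_def)
  then show ?thesis using grow_shape[of "nd j" D "pend j" c "req j"] rsok[OF req_in[OF j]]
    by (auto simp: Sv_def nd_def)
qed

lemma X_Suc: "X (Suc v) = X v + c (Suc v)"
  by (simp add: X_def setcost_def pathset_def)

lemma X_mono: "v \<le> w \<Longrightarrow> w \<le> D \<Longrightarrow> X v \<le> X w"
proof (induction w)
  case 0 then show ?case by simp
next
  case (Suc w)
  then show ?case using cpos[of "Suc w"] X_Suc[of w] by (cases "v = Suc w") auto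
qed

lemma X_strict: "v < w \<Longrightarrow> w \<le> D \<Longrightarrow> X v < X w"
  using X_mono[of v "w - 1"] X_Suc[of "w - 1"] cpos[of w] by (cases w) auto

lemma X_nonneg: "v \<le> D \<Longrightarrow> X v \<ge> 0"
  using X_mono[of 0 v] by (simp add: X_def setcost_def pathset_def)

lemma Sv_cost: "j < N \<Longrightarrow> setcost c (Sv j) \<le> 2 * X (nd j)"
  using grow_cost[of "pathset (nd j)" c "req j" "pend j"] X_nonneg[of "nd j"] rsok[OF req_in[of j]]
  by (auto simp: Sv_def X_def nd_def pathset_def)

end



context dbl begin

lemma P1:
  assumes ij: "i < j" "j < N" and ti: "trig i" and tj: "trig j" and a: "rarr (req j) \<le> dl i"
  shows "nd j \<notin> Sv i"
proof
  assume n: "nd j \<in> Sv i"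
  have r: "req j \<in> set rs" using req_in ij by simp
  have "dl i < dl j" using dl_less ij by simp
  then have "satisfies (Sv i, dl i) (req j)" using n a by (simp add: satisfies_def nd_def dl_def)
  then have "req j \<in> sat (Suc i)" using sat_step[of i] ij ti r by simp
  moreover have "sat (Suc i) \<subseteq> sat j" using sat_mono ij by simp
  ultimately show False using tj by (auto simp: trig_def)
qed

lemma Sv_notin: "i < N \<Longrightarrow> Sv i = pathset m \<Longrightarrow> 1 \<le> w \<Longrightarrow> w \<notin> Sv i \<Longrightarrow> m < w"
  by (auto simp: pathset_def)

lemma P2:
  assumes ij: "i < j" "j < N" and ti: "trig i" and tj: "trig j" and a: "rarr (req j) \<le> dl i"
  shows "X (nd j) > 2 * X (nd i)"
proof -
  have iN: "i < N" using ij by simp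
  have rj: "req j \<in> set rs" using req_in ij by simp
  have nsj: "req j \<notin> sat i" using sat_mono[of i j] ij tj by (auto simp: trig_def)
  have inp: "req j \<in> set (pend i)" using rj setS a nsj by (simp add: pend_def)
  have notin: "rnode (req j) \<notin> grow c (req i) (pathset (nd i)) (pend i)"
    using P1[OF assms] by (simp add: nd_def Sv_def)
  have srt: "sorted (map rdl (pend i))" unfolding pend_def using sortedS by (rule sorted_filter)
  have ge1: "\<forall>x\<in>set (pend i). rnode x \<ge> 1" using rsok setS by (auto simp: pend_def)
  obtain \<gamma> where g: "\<gamma> \<in> set (pend i)" "rdl \<gamma> \<le> rdl (req j)" "rnode \<gamma> \<notin> Sv i"
    "setcost c (Sv i) + setcost c (pathset (rnode \<gamma>) - Sv i) > 2 * setcost c (pathset (rnode (req i)))"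
    using grow_stop[OF srt inp notin ge1] unfolding Sv_def by blast
  have gr: "\<gamma> \<in> set rs" and garr: "rarr \<gamma> \<le> dl i" and gns: "\<gamma> \<notin> sat i"
    using g(1) setS by (auto simp: pend_def)
  obtain m where m: "Sv i = pathset m" "nd i \<le> m" "m \<le> D" using Sv_shape[OF iN] by blast
  have gm: "m < rnode \<gamma>" using Sv_notin[OF iN m(1)] rsok[OF gr] g(3) by simp
  have "setcost c (Sv i) + setcost c (pathset (rnode \<gamma>) - Sv i) = setcost c (Sv i \<union> pathset (rnode \<gamma>))"
    by (simp add: setcost_union_diff m(1) pathset_def)
  also have "Sv i \<union> pathset (rnode \<gamma>) = pathset (rnode \<gamma>)" using m(1) gm by (auto simp: pathset_def)
  finally have Xg: "X (rnode \<gamma>) > 2 * X (nd i)" using g(4) by (simp add: X_def nd_def)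
  show ?thesis
  proof (cases "\<gamma> = req j")
    case True then show ?thesis using Xg by (simp add: nd_def)
  next
    case False
    then have "rdl \<gamma> \<noteq> rdl (req j)" using inj gr rj by blast
    then have lt: "rdl \<gamma> < dl j" using g(2) by (simp add: dl_def)
    obtain g' where g': "g' < N" "req g' = \<gamma>" using in_req[OF gr] by blast
    have "g' < j" using dl_less_iff[of g' j] g' ij lt by (simp add: dl_def)
    have "\<gamma> \<in> sat (Suc g')" using req_sat[OF g'(1)] g'(2) by simp
    then obtain k where k: "i \<le> k" "k < Suc g'" "trig k" "satisfies (Sv k, dl k) \<gamma>"
      using first_sat[OF gns, of "Suc g'"] g' iN by auto
    have "k \<noteq> i" using k(4) g(3) by (auto simp: satisfies_def)
    then have ik: "i < k" "k < j" using k \<open>g' < j\<close> by auto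
    have kN: "k < N" using ik ij by simp
    have "req j \<notin> sat (Suc k)" using sat_mono[of "Suc k" j] ik ij tj by (auto simp: trig_def)
    then have ns: "\<not> satisfies (Sv k, dl k) (req j)" using sat_step[OF kN] k(3) rj by auto
    have "dl i < dl k" "dl k < dl j" using dl_less ik ij by auto
    then have "nd j \<notin> Sv k" using ns a by (auto simp: satisfies_def nd_def dl_def)
    obtain m' where m': "Sv k = pathset m'" "nd k \<le> m'" "m' \<le> D" using Sv_shape[OF kN] by blast
    have "m' < nd j" using Sv_notin[OF kN m'(1)] rsok[OF rj] \<open>nd j \<notin> Sv k\<close> by (simp add: nd_def)
    moreover have "rnode \<gamma> \<le> m'" using k(4) m'(1) by (simp add: satisfies_def pathset_def)
    ultimately have "X (rnode \<gamma>) < X (nd j)" using X_strict rsok[OF rj] by (simp add: nd_def)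
    then show ?thesis using Xg by simp
  qed
qed

end



lemma rooted_path:
  assumes "rooted_subtree D Q" "v \<in> Q" "1 \<le> u" "u \<le> v"
  shows "u \<in> Q"
proof -
  have "\<forall>v. v \<in> Q \<longrightarrow> u \<le> v \<longrightarrow> v - u = d \<longrightarrow> u \<in> Q" for d
  proof (induction d)
    case 0 then show ?case by auto
  next
    case (Suc d)
    show ?case
    proof (intro allI impI)
      fix v assume v: "v \<in> Q" "u \<le> v" "v - u = Suc d"
      then have "v - 1 \<in> Q" using assms(1,3) by (auto simp: rooted_subtree_def)
      then show "u \<in> Q" using Suc.IH v by auto
    qed
  qed
  then show ?thesis using assms by blast
qed

context dbl begin

lemma X_le_O:
  assumes "rooted_subtree D Q" "v \<in> Q"
  shows "X v \<le> setcost c Q"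
proof -
  have sub: "pathset v \<subseteq> Q" using rooted_path[OF assms] by (auto simp: pathset_def)
  have OD: "Q \<subseteq> {1..D}" using assms(1) by (simp add: rooted_subtree_def)
  have fin: "finite Q" using OD finite_subset by blast
  have "\<forall>x\<in>Q - pathset v. 0 \<le> c x" using OD cpos by force
  then show ?thesis unfolding X_def setcost_def using sum_mono2[OF fin sub] by blast
qed

lemma setcost_O_nonneg: "rooted_subtree D Q \<Longrightarrow> 0 \<le> setcost c Q"
  unfolding setcost_def rooted_subtree_def using cpos by (intro sum_nonneg) (force)

definition "Y j = setcost c (Sv j)"

lemma Y_nonneg: "j < N \<Longrightarrow> 0 \<le> Y j"
  using Sv_shape[of j] X_nonneg by (auto simp: Y_def X_def)

lemma chainA:
  fixes J :: "nat set"
  assumes J: "\<And>i j. i \<in> J \<Longrightarrow> j \<in> J \<Longrightarrow> i < j \<Longrightarrow> rarr (req j) \<le> dl i"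
    and JT: "\<And>j. j \<in> J \<Longrightarrow> j < N \<and> trig j"
  shows "j \<in> J \<Longrightarrow> (\<Sum>j'\<in>{j'\<in>J. j' < j}. Y j') \<le> hh (nd j) * X (nd j)"
proof (induction j rule: less_induct)
  case (less j)
  have jN: "j < N" "trig j" using JT less.prems by auto
  have ndj: "1 \<le> nd j" "nd j \<le> D" using rsok[OF req_in[OF jN(1)]] by (auto simp: nd_def)
  have Xj: "0 \<le> X (nd j)" using X_nonneg ndj by simp
  have hj: "0 \<le> hh (nd j)" using hh_nonneg ndj by simp
  show ?case
  proof (cases "{j'\<in>J. j' < j} = {}")
    case True then show ?thesis using Xj hj by (simp only: sum.empty) simp
  next
    case False
    have finJ: "finite {j'\<in>J. j' < j}" by simp
    define i where "i = Max {j'\<in>J. j' < j}"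
    have iJ: "i \<in> J" "i < j" using Max_in[OF finJ False] unfolding i_def by auto
    have iN: "i < N" "trig i" using JT iJ by auto
    have eq: "{j'\<in>J. j' < j} = insert i {j'\<in>J. j' < i}"
      using iJ Max_ge[OF finJ] unfolding i_def[symmetric] by fastforce
    have sum_eq: "(\<Sum>j'\<in>{j'\<in>J. j' < j}. Y j') = Y i + (\<Sum>j'\<in>{j'\<in>J. j' < i}. Y j')"
      unfolding eq by (subst sum.insert) auto
    have IH: "(\<Sum>j'\<in>{j'\<in>J. j' < i}. Y j') \<le> hh (nd i) * X (nd i)" using less.IH iJ by blast
    have a: "rarr (req j) \<le> dl i" using J iJ less.prems by blast
    have p1: "nd j \<notin> Sv i" using P1[OF iJ(2) jN(1) iN(2) jN(2) a] .
    have p2: "X (nd j) > 2 * X (nd i)" using P2[OF iJ(2) jN(1) iN(2) jN(2) a] .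
    have ndi: "1 \<le> nd i" "nd i \<le> D" using rsok[OF req_in[OF iN(1)]] by (auto simp: nd_def)
    have hi: "0 \<le> hh (nd i)" using hh_nonneg ndi by simp
    have Xi: "0 \<le> X (nd i)" using X_nonneg ndi by simp
    obtain m where m: "Sv i = pathset m" "nd i \<le> m" "m \<le> D" using Sv_shape[OF iN(1)] by blast
    have mj: "m < nd j" using Sv_notin[OF iN(1) m(1) ndj(1) p1] .
    have Yi: "Y i = X m" by (simp add: Y_def X_def m(1))
    have "Y i + hh (nd i) * X (nd i) \<le> hh (nd j) * X (nd j)"
    proof (cases "m = nd i")
      case True
      have "Y i + hh (nd i) * X (nd i) = (hh (nd i) + 1) * X (nd i)" using Yi True by (simp add: algebra_simps)
      also have "\<dots> \<le> (hh (nd i) + 1) * (X (nd j) / 2)" using p2 hi by (intro mult_left_mono) auto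
      also have "\<dots> = ((hh (nd i) + 1) / 2) * X (nd j)" by simp
      also have "\<dots> \<le> hh (nd i + 1) * X (nd j)" using hh_one[OF ndi(1)] Xj by (intro mult_right_mono) auto
      also have "\<dots> \<le> hh (nd j) * X (nd j)" using hh_mono[of "nd i + 1" "nd j"] mj True Xj
        by (intro mult_right_mono) auto
      finally show ?thesis .
    next
      case False
      have Y1: "Y i \<le> X (nd j)" using Yi X_mono[of m "nd j"] mj ndj by simp
      have "hh (nd i) * X (nd i) \<le> hh (nd i) * (X (nd j) / 2)" using p2 hi by (intro mult_left_mono) auto
      then have "Y i + hh (nd i) * X (nd i) \<le> (hh (nd i) / 2 + 1) * X (nd j)"
        using Y1 by (simp add: algebra_simps)
      also have "\<dots> = hh (nd i + 2) * X (nd j)" by (simp only: hh_two)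
      also have "\<dots> \<le> hh (nd j) * X (nd j)" using hh_mono[of "nd i + 2" "nd j"] mj False m(2) Xj
        by (intro mult_right_mono) auto
      finally show ?thesis .
    qed
    then show ?thesis using sum_eq IH by linarith
  qed
qed

lemma per_service:
  assumes Q: "rooted_subtree D Q"
  shows "(\<Sum>j\<in>{j. j < N \<and> trig j \<and> satisfies (Q, \<tau>) (req j)}. Y j)
          \<le> (4 - 2 powr (1 - real D / 2)) * setcost c Q"
proof -
  define J where "J = {j. j < N \<and> trig j \<and> satisfies (Q, \<tau>) (req j)}"
  have R: "4 - 2 powr (1 - real D / 2) = hh D + 2" by (simp add: hh_def)
  have hD: "0 \<le> hh D" using hh_nonneg Dge by simp
  have JJ: "\<And>i j. i \<in> J \<Longrightarrow> j \<in> J \<Longrightarrow> i < j \<Longrightarrow> rarr (req j) \<le> dl i"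
    unfolding J_def by (auto simp: satisfies_def dl_def)
  have JT: "\<And>j. j \<in> J \<Longrightarrow> j < N \<and> trig j" unfolding J_def by auto
  have finJ: "finite J" unfolding J_def by simp
  show ?thesis
  proof (cases "J = {}")
    case True then show ?thesis using setcost_O_nonneg[OF Q] hD unfolding J_def[symmetric] R by simp
  next
    case False
    define j where "j = Max J"
    have jJ: "j \<in> J" using Max_in[OF finJ False] j_def by simp
    have jN: "j < N" "trig j" using JT jJ by auto
    have ndj: "1 \<le> nd j" "nd j \<le> D" using rsok[OF req_in[OF jN(1)]] by (auto simp: nd_def)
    have eq: "J = insert j {j'\<in>J. j' < j}" using jJ Max_ge[OF finJ] unfolding j_def[symmetric]
      by fastforce
    have "(\<Sum>j'\<in>J. Y j') = Y j + (\<Sum>j'\<in>{j'\<in>J. j' < j}. Y j')"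
      by (subst eq) (subst sum.insert, auto simp: finJ)
    also have "\<dots> \<le> 2 * X (nd j) + hh (nd j) * X (nd j)"
      using chainA[OF JJ JT jJ] Sv_cost[OF jN(1)] unfolding Y_def by linarith
    also have "\<dots> = (hh (nd j) + 2) * X (nd j)" by (simp add: algebra_simps)
    also have "\<dots> \<le> (hh D + 2) * X (nd j)" using hh_mono[OF ndj(2)] X_nonneg[OF ndj(2)]
      by (intro mult_right_mono) auto
    also have "\<dots> \<le> (hh D + 2) * setcost c Q"
      using X_le_O[OF Q, of "nd j"] jJ hD unfolding J_def
      by (intro mult_left_mono) (auto simp: satisfies_def nd_def)
    finally show ?thesis unfolding J_def[symmetric] R .
  qed
qed

end



lemma sum_set_le_sum_list:
  fixes f :: "'a \<Rightarrow> real"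
  shows "(\<forall>x\<in>set l. 0 \<le> f x) \<Longrightarrow> sum f (set l) \<le> sum_list (map f l)"
proof (induction l)
  case Nil then show ?case by simp
next
  case (Cons x l)
  have "sum f (set (x # l)) \<le> f x + sum f (set l)"
  proof (cases "x \<in> set l")
    case True then show ?thesis using Cons.prems by (simp add: insert_absorb)
  next
    case False then show ?thesis by simp
  qed
  then show ?case using Cons by simp
qed

context dbl begin

lemma double_eq: "double c rs = sch N"
  by (simp add: double_def sch_def st_def rsS_def N_def)

lemma sch0: "sch 0 = []" and sat0: "sat 0 = {}" by (simp_all add: sch_def sat_def st_def)

lemma sch_set: "k \<le> N \<Longrightarrow> s \<in> set (sch k) \<Longrightarrow> \<exists>j<k. s = (Sv j, dl j)"
proof (induction k)
  case 0 then show ?case by (simp add: sch0)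
next
  case (Suc k)
  have "s \<in> set (sch k) \<or> s = (Sv k, dl k)" using Suc.prems sch_step[of k] by (auto split: if_splits)
  then show ?case using Suc.IH Suc.prems(1) by (metis Suc_leD less_SucI lessI)
qed

lemma sat_served: "k \<le> N \<Longrightarrow> \<gamma> \<in> sat k \<Longrightarrow> \<exists>s\<in>set (sch k). satisfies s \<gamma>"
proof (induction k)
  case 0 then show ?case by (simp add: sat0)
next
  case (Suc k) then show ?case using sat_step[of k] sch_step[of k] by (auto split: if_splits)
qed

lemma sch_cost: "k \<le> N \<Longrightarrow> sched_cost c (sch k) = (\<Sum>j\<in>{j. j < k \<and> trig j}. Y j)"
proof (induction k)
  case 0 then show ?case by (simp add: sch0 sched_cost_def)
next
  case (Suc k)
  show ?case
  proof (cases "trig k")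
    case True
    have e: "{j. j < Suc k \<and> trig j} = insert k {j. j < k \<and> trig j}" using True by auto
    show ?thesis using Suc sch_step[of k] True unfolding e
      by (simp add: sched_cost_def Y_def)
  next
    case False
    have e: "{j. j < Suc k \<and> trig j} = {j. j < k \<and> trig j}" using False less_Suc_eq by auto
    show ?thesis using Suc sch_step[of k] False unfolding e by simp
  qed
qed

lemma rooted_Sv: "j < N \<Longrightarrow> rooted_subtree D (Sv j)"
proof -
  assume j: "j < N"
  obtain m where m: "Sv j = pathset m" "nd j \<le> m" "m \<le> D" using Sv_shape[OF j] by blast
  have "1 \<le> nd j" using rsok[OF req_in[OF j]] by (simp add: nd_def)
  then show ?thesis using m by (auto simp: rooted_subtree_def pathset_def)
qed

lemma feas: "feasible D rs (double c rs)"
  unfolding feasible_def double_eq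
proof (intro conjI ballI)
  fix s assume "s \<in> set (sch N)"
  then obtain j where "j < N" "s = (Sv j, dl j)" using sch_set by blast
  then show "rooted_subtree D (fst s)" using rooted_Sv by simp
next
  fix \<rho> assume r: "\<rho> \<in> set rs"
  obtain g where g: "g < N" "req g = \<rho>" using in_req[OF r] by blast
  have "\<rho> \<in> sat N" using req_sat[OF g(1)] g sat_mono[of "Suc g" N] by auto
  then show "\<exists>s\<in>set (sch N). satisfies s \<rho>" using sat_served by simp
qed

lemma cost_bound:
  assumes f: "feasible D rs sch'"
  shows "sched_cost c (double c rs) \<le> (4 - 2 powr (1 - real D / 2)) * sched_cost c sch'"
proof -
  define R where "R = 4 - 2 powr (1 - real D / 2)"
  define T where "T = {j. j < N \<and> trig j}"
  define P where "P = (\<lambda>s j. satisfies s (req j))"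
  have R0: "0 \<le> R" using hh_nonneg[OF Dge] by (simp add: R_def hh_def)
  have finT: "finite T" unfolding T_def by simp
  have rt: "\<And>s. s \<in> set sch' \<Longrightarrow> rooted_subtree D (fst s)" using f by (simp add: feasible_def)
  have "sched_cost c (double c rs) = (\<Sum>j\<in>T. Y j)" unfolding double_eq T_def by (simp add: sch_cost)
  also have "\<dots> \<le> (\<Sum>j\<in>T. \<Sum>s\<in>set sch'. if P s j then Y j else 0)"
  proof (rule sum_mono)
    fix j assume j: "j \<in> T"
    have jN: "j < N" using j T_def by simp
    obtain s0 where s0: "s0 \<in> set sch'" "P s0 j" using f req_in[OF jN] by (auto simp: feasible_def P_def)
    have "(if P s0 j then Y j else 0) \<le> (\<Sum>s\<in>set sch'. if P s j then Y j else 0)"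
      by (rule member_le_sum[OF s0(1)]) (use Y_nonneg[OF jN] in auto)
    then show "Y j \<le> (\<Sum>s\<in>set sch'. if P s j then Y j else 0)" using s0 by simp
  qed
  also have "\<dots> = (\<Sum>s\<in>set sch'. \<Sum>j\<in>T. if P s j then Y j else 0)" by (rule sum.swap)
  also have "\<dots> = (\<Sum>s\<in>set sch'. \<Sum>j\<in>{j\<in>T. P s j}. Y j)"
    using finT by (simp add: sum.inter_filter)
  also have "\<dots> \<le> (\<Sum>s\<in>set sch'. R * setcost c (fst s))"
  proof (rule sum_mono)
    fix s assume s: "s \<in> set sch'"
    have e: "{j\<in>T. P s j} = {j. j < N \<and> trig j \<and> satisfies (fst s, snd s) (req j)}"
      by (auto simp: T_def P_def)
    show "(\<Sum>j\<in>{j\<in>T. P s j}. Y j) \<le> R * setcost c (fst s)"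
      unfolding e R_def by (rule per_service[OF rt[OF s]])
  qed
  also have "\<dots> \<le> sum_list (map (\<lambda>s. R * setcost c (fst s)) sch')"
    using R0 setcost_O_nonneg[OF rt] by (intro sum_set_le_sum_list) auto
  also have "\<dots> = R * sched_cost c sch'"
    by (simp add: sched_cost_def sum_list_const_mult)
  finally show ?thesis unfolding R_def .
qed

end

theorem mainTheorem5:
  fixes D :: nat
  assumes "D \<ge> 1"
  shows "competitive_on_path D double (4 - 2 powr (1 - real D / 2))"
  unfolding competitive_on_path_def
proof (intro allI impI)
  fix c rs assume v: "valid_instance D c rs"
  interpret dbl D c rs by (rule dbl.intro[OF v])
  show "feasible D rs (double c rs) \<and> (\<forall>sch. feasible D rs sch \<longrightarrow> sched_cost c (double c rs) \<le> (4 - 2 powr (1 - real D / 2)) * sched_cost c sch)"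
    using feas cost_bound by blast
qed


end
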